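(* Let $\mathtt{Hol}_{\mathfrak T}$ be a holistic model and $\gamma$ a formula. (1) Suppose an occurrence of $\intercal(\alpha_1,\alpha_2,\alpha_3)$ appears in $Level_i^\gamma$, so that $Level_{i+1}^\gamma=(\beta_1,\dots,\beta_r)$ with $\alpha_1=\beta_{k_1}$, $\alpha_2=\beta_{k_2}$, $\alpha_3=\beta_{k_3}$ the corresponding occurrences ($k_2=k_1+1$, $k_3=k_1+2$). Then $$\mathtt{Hol}^\gamma_{\mathfrak T}(\intercal(\alpha_1,\alpha_2,\alpha_3))={}^{\mathfrak D}\mathtt T_{\mathfrak T}^{(At(\alpha_1),At(\alpha_2),At(\alpha_3))}\Big(Red^{(k_1,k_2,k_3)}_{[At(\beta_1),\dots,At(\beta_r)]}\big(\mathtt{Hol}_{\mathfrak T}(Level_{i+1}^\gamma)\big)\Big).$$ (2) Similarly, if an occurrence of $\alpha_1\uplus\alpha_2$ appears in $Level_i^\gamma$ and $\alpha_1=\beta_{k_1}$, $\alpha_2=\beta_{k_2}$ are the corresponding occurrences in $Level_{i+1}^\gamma=(\beta_1,\dots,\beta_r)$, then $$\mathtt{Hol}^\gamma_{\mathfrak T}(\alpha_1\uplus\alpha_2)={}^{\mathfrak D}\mathtt{XOR}_{\mathfrak T}^{(At(\alpha_1),At(\alpha_2))}\Big(Red^{(k_1,k_2)}_{[At(\beta_1),\dots,At(\beta_r)]}\big(\mathtt{Hol}_{\mathfrak T}(Level_{i+1}^\gamma)\big)\Big).$$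
   Context: Hilbert spaces and states: for $n\ge1$, $\mathcal H^{(n)}=(\mathbb C^2)^{\otimes n}$ with canonical basis $|x_1,\dots,x_n\rangle$ ($x_i\in\{0,1\}$, $|0\rangle=(1,0)$, $|1\rangle=(0,1)$); $\mathfrak D(\mathcal H^{(n)})$ is the set of density operators (qumixes) on $\mathcal H^{(n)}$. A truth-perspective is a unitary $\mathfrak T$ on $\mathbb C^2$, $\mathfrak T^{(n)}=\mathfrak T^{\otimes n}$. $^{\mathfrak T}P_1^{(n)}$ (resp. $^{\mathfrak T}P_0^{(n)}$) is the projection onto the span of the vectors $\mathfrak T^{(n)}|x_1,\dots,x_n\rangle$ with $x_n=1$ (resp. $0$). For $\rho$ on $\mathcal H^{(n_1)}\otimes\cdots\otimes\mathcal H^{(n_t)}$, $Red^{(j_1,\dots,j_s)}_{[n_1,\dots,n_t]}(\rho)$ is the reduced state (partial trace over all factors other than $j_1,\dots,j_s$). Gates (on canonical basis, extended linearly): $\mathtt{NOT}^{(n)}|x_1..x_n\rangle=|x_1..x_{n-1}\rangle\otimes|1-x_n\rangle$; $\sqrt{\mathtt I}^{(n)}|x_1..x_n\rangle=|x_1..x_{n-1}\rangle\otimes\frac1{\sqrt2}((-1)^{x_n}|x_n\rangle+|1-x_n\rangle)$; $\sqrt{\mathtt{NOT}}^{(n)}|x_1..x_n\rangle=|x_1..x_{n-1}\rangle\otimes(\frac{1-i}2|x_n\rangle+\frac{1+i}2|1-x_n\rangle)$; $\mathtt{XOR}^{(m,n)}|x_1..x_m,y_1..y_n\rangle=|x_1..x_m,y_1..y_{n-1}\rangle\otimes|x_m\oplus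 y_n\rangle$; $\mathtt T^{(m,n,p)}|x_1..x_m,y_1..y_n,z_1..z_p\rangle=|x_1..x_m,y_1..y_n,z_1..z_{p-1}\rangle\otimes|x_my_n\oplus z_p\rangle$ ($\oplus$ = addition mod 2). For a gate $G$ on $\mathcal H^{(n)}$: $G_{\mathfrak T}=\mathfrak T^{(n)}G\mathfrak T^{(n)\dagger}$, $^{\mathfrak D}G_{\mathfrak T}(\rho)=G_{\mathfrak T}\rho G_{\mathfrak T}^\dagger$. Language: formulas built from atomic formulas (including distinguished atoms $\mathbf t,\mathbf f$) with unary $\lnot,\sqrt{id},\sqrt\lnot$, binary $\uplus$, ternary $\intercal$. $At(\alpha)$ = number of occurrences of atomic formulas in $\alpha$. Syntactical tree: $Level_1^\alpha=(\alpha)$; $Level_{i+1}^\alpha$ is obtained from $Level_i^\alpha=(\beta_1,\dots,\beta_r)$ by replacing each non-atomic $\beta_j$ by the sequence of its immediate subformulas (its arguments, in order) and keeping atomic $\beta_j$; the last level $Level_h^\alpha$ lists all atomic occurrences. Then $\mathcal H^{(At(\alpha))}=\bigotimes_j\mathcal H^{(At(\beta_j))}$. The $\mathfrak T$-gate $G^\alpha_{\mathfrak T(i)}$ ($1\le i<h$) is the tensor product over $j$ of: identity of $\mathbb C^2$ if $\beta_j$ atomic; $\mathtt{NOT}_{\mathfrak T}^{(At\beta)}$, $\sqrt{\mathtt I}_{\mathfrak T}^{(At\beta)}$, $\sqrt{\mathtt{NOT}}_{\mathfrak T}^{(At\beta)}$ for $\lnot\beta,\sqrt{id}\beta,\sqrt\lnot\beta$;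 $\mathtt{XOR}_{\mathfrak T}^{(At\beta',At\beta'')}$ for $\beta'\uplus\beta''$; $\mathtt T_{\mathfrak T}^{(At\beta',At\beta'',At\beta''')}$ for $\intercal(\beta',\beta'',\beta''')$. Holistic model: a map $\mathtt{Hol}_{\mathfrak T}$ assigning to each level $Level_i^\alpha$ of each formula $\alpha$ a qumix in $\mathfrak D(\mathcal H^{(At(\alpha))})$ such that (a) $\mathtt{Hol}_{\mathfrak T}(Level_i^\alpha)={}^{\mathfrak D}G^\alpha_{\mathfrak T(i)}(\mathtt{Hol}_{\mathfrak T}(Level_{i+1}^\alpha))$ for $1\le i<h$; (b) (normality) for each $\gamma$, with the contextual meaning of the occurrence $\beta_j$ in $Level_i^\gamma=(\beta_1,\dots,\beta_r)$ defined as $Red^{(j)}_{[At\beta_1,\dots,At\beta_r]}(\mathtt{Hol}_{\mathfrak T}(Level_i^\gamma))$, all occurrences of the same subformula $\beta$ in the tree of $\gamma$ have the same contextual meaning, denoted $\mathtt{Hol}^\gamma_{\mathfrak T}(\beta)$; (c) every occurrence of $\mathbf f$ (resp. $\mathbf t$) has contextual meaning $^{\mathfrak T}P_0^{(1)}$ (resp. $^{\mathfrak T}P_1^{(1)}$). *)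

theory Defs
  imports "Jordan_Normal_Form.Matrix"
begin

text \<open>Operators on (C^2)^{tensor n} are complex 2^n x 2^n matrices w.r.t. the canonical
 basis |x_1..x_n>, which is identified with the index sum_k x_k 2^(n-k)
 (x_1 most significant).  Tensor products are Kronecker products, first factor
 most significant, matching this ordering.\<close>

definition adj :: "complex mat \<Rightarrow> complex mat" where
  "adj A = mat (dim_col A) (dim_row A) (\<lambda>(i,j). cnj (A $$ (j,i)))"

definition tr :: "complex mat \<Rightarrow> complex" where
  "tr A = (\<Sum>i<dim_row A. A $$ (i,i))"

definition unitary_mat :: "nat \<Rightarrow> complex mat \<Rightarrow> bool" where
  "unitary_mat d U \<longleftrightarrow> U \<in> carrier_mat d d \<and> adj U * U = 1\<^sub>m d \<and> U * adj U = 1\<^sub>m d"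

definition density :: "nat \<Rightarrow> complex mat \<Rightarrow> bool" where
  "density d \<rho> \<longleftrightarrow> \<rho> \<in> carrier_mat d d \<and>
     (\<forall>v \<in> carrier_vec d. Im (conjugate v \<bullet> (\<rho> *\<^sub>v v)) = 0 \<and> 0 \<le> Re (conjugate v \<bullet> (\<rho> *\<^sub>v v))) \<and>
     tr \<rho> = 1"

definition kron :: "complex mat \<Rightarrow> complex mat \<Rightarrow> complex mat" where
  "kron A B = mat (dim_row A * dim_row B) (dim_col A * dim_col B)
     (\<lambda>(i,j). A $$ (i div dim_row B, j div dim_col B) * B $$ (i mod dim_row B, j mod dim_col B))"

definition kron_list :: "complex mat list \<Rightarrow> complex mat" where
  "kron_list As = foldr kron As (1\<^sub>m 1)"

definition kron_pow :: "complex mat \<Rightarrow> nat \<Rightarrow> complex mat" where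
  "kron_pow A n = kron_list (replicate n A)"

definition app_gate :: "complex mat \<Rightarrow> complex mat \<Rightarrow> complex mat" where
  "app_gate G \<rho> = G * \<rho> * adj G"

definition persp :: "complex mat \<Rightarrow> nat \<Rightarrow> complex mat \<Rightarrow> complex mat" where
  "persp T n G = kron_pow T n * G * adj (kron_pow T n)"

text \<open>Projection onto span of the vectors T^(n)|x_1..x_n> with x_n = b
  (these vectors are orthonormal since T^(n) is unitary, so the projection is
  T^(n) D_b T^(n)^dagger with D_b the diagonal projection onto the basis vectors with x_n = b).\<close>
definition projP :: "complex mat \<Rightarrow> nat \<Rightarrow> nat \<Rightarrow> complex mat" where
  "projP T b n = kron_pow T n *
     mat (2^n) (2^n) (\<lambda>(r,c). if r = c \<and> c mod 2 = b then 1 else 0) * adj (kron_pow T n)"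

definition perm_mat :: "nat \<Rightarrow> (nat \<Rightarrow> nat) \<Rightarrow> complex mat" where
  "perm_mat d f = mat d d (\<lambda>(r,c). if r = f c then 1 else 0)"

text \<open>In index c, the last qubit x_n is c mod 2 and the first n-1 qubits are c div 2.\<close>
definition NOT_g :: "nat \<Rightarrow> complex mat" where
  "NOT_g n = perm_mat (2^n) (\<lambda>c. 2 * (c div 2) + (1 - c mod 2))"

definition SqrtI_g :: "nat \<Rightarrow> complex mat" where
  "SqrtI_g n = mat (2^n) (2^n) (\<lambda>(r,c).
     if r div 2 = c div 2 then
       (if r mod 2 = c mod 2 then (-1) ^ (c mod 2) / complex_of_real (sqrt 2)
        else 1 / complex_of_real (sqrt 2))
     else 0)"

definition SqrtNOT_g :: "nat \<Rightarrow> complex mat" where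
  "SqrtNOT_g n = mat (2^n) (2^n) (\<lambda>(r,c).
     if r div 2 = c div 2 then
       (if r mod 2 = c mod 2 then (1 - \<i>) / 2 else (1 + \<i>) / 2)
     else 0)"

text \<open>XOR^(m,n): index c = x * 2^n + y with x < 2^m, y < 2^n; x_m = x mod 2, y_n = y mod 2.\<close>
definition XOR_g :: "nat \<Rightarrow> nat \<Rightarrow> complex mat" where
  "XOR_g m n = perm_mat (2^(m+n)) (\<lambda>c.
     let x = c div 2^n; y = c mod 2^n in
     x * 2^n + (2 * (y div 2) + ((x mod 2 + y mod 2) mod 2)))"

text \<open>Toffoli T^(m,n,p): index c = (x * 2^n + y) * 2^p + z.\<close>
definition Tof_g :: "nat \<Rightarrow> nat \<Rightarrow> nat \<Rightarrow> complex mat" where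
  "Tof_g m n p = perm_mat (2^(m+n+p)) (\<lambda>c.
     let x = c div 2^(n+p); y = (c div 2^p) mod 2^n; z = c mod 2^p in
     (x * 2^n + y) * 2^p + (2 * (z div 2) + ((x mod 2 * (y mod 2) + z mod 2) mod 2)))"

datatype form = Atom nat | TT | FF | Neg form | SqId form | SqNeg form
  | Xor form form | Tof form form form

fun is_atomic :: "form \<Rightarrow> bool" where
  "is_atomic (Atom _) = True" | "is_atomic TT = True" | "is_atomic FF = True"
| "is_atomic _ = False"

fun At :: "form \<Rightarrow> nat" where
  "At (Atom _) = 1" | "At TT = 1" | "At FF = 1"
| "At (Neg a) = At a" | "At (SqId a) = At a" | "At (SqNeg a) = At a"
| "At (Xor a b) = At a + At b" | "At (Tof a b c) = At a + At b + At c"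

fun expand1 :: "form \<Rightarrow> form list" where
  "expand1 (Neg a) = [a]" | "expand1 (SqId a) = [a]" | "expand1 (SqNeg a) = [a]"
| "expand1 (Xor a b) = [a, b]" | "expand1 (Tof a b c) = [a, b, c]"
| "expand1 a = [a]"

definition expand :: "form list \<Rightarrow> form list" where
  "expand L = concat (map expand1 L)"

text \<open>Level_i^alpha, for i \<ge> 1 (Level_1 = (alpha)).\<close>
definition level :: "form \<Rightarrow> nat \<Rightarrow> form list" where
  "level \<alpha> i = (expand ^^ (i - 1)) [\<alpha>]"

fun height :: "form \<Rightarrow> nat" where
  "height (Neg a) = Suc (height a)" | "height (SqId a) = Suc (height a)"
| "height (SqNeg a) = Suc (height a)"
| "height (Xor a b) = Suc (max (height a) (height b))"
| "height (Tof a b c) = Suc (max (height a) (max (height b) (height c)))"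
| "height _ = 1"

text \<open>Position in Level_{i+1} of the first argument of the occurrence at position j of Level_i.\<close>
definition child_pos :: "form list \<Rightarrow> nat \<Rightarrow> nat" where
  "child_pos L j = length (concat (map expand1 (take j L)))"

fun local_gate :: "complex mat \<Rightarrow> form \<Rightarrow> complex mat" where
  "local_gate T (Neg a) = persp T (At a) (NOT_g (At a))"
| "local_gate T (SqId a) = persp T (At a) (SqrtI_g (At a))"
| "local_gate T (SqNeg a) = persp T (At a) (SqrtNOT_g (At a))"
| "local_gate T (Xor a b) = persp T (At a + At b) (XOR_g (At a) (At b))"
| "local_gate T (Tof a b c) = persp T (At a + At b + At c) (Tof_g (At a) (At b) (At c))"
| "local_gate T _ = 1\<^sub>m 2"

definition level_gate :: "complex mat \<Rightarrow> form \<Rightarrow> nat \<Rightarrow> complex mat" where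
  "level_gate T \<alpha> i = kron_list (map (local_gate T) (level \<alpha> i))"

text \<open>Mixed-radix encoding of a digit tuple (first digit most significant).\<close>
definition enc :: "nat list \<Rightarrow> nat list \<Rightarrow> nat" where
  "enc ds xs = foldl (\<lambda>acc (d, x). acc * d + x) 0 (zip ds xs)"

definition tuples :: "nat list \<Rightarrow> nat list set" where
  "tuples ds = {xs. length xs = length ds \<and> (\<forall>l < length ds. xs ! l < ds ! l)}"

text \<open>Red^{(J)}_{[n_1..n_t]}(rho): partial trace over all factors whose (0-based) index
  is not in J; J is the list of kept factors in increasing order.\<close>
definition Red :: "nat list \<Rightarrow> nat list \<Rightarrow> complex mat \<Rightarrow> complex mat" where
  "Red ns J \<rho> = (let ds = map (\<lambda>n. 2 ^ n) ns; D = prod_list (map (\<lambda>l. ds ! l) J) in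
     mat D D (\<lambda>(a, b). \<Sum>(xs, ys) \<in> {(xs, ys). xs \<in> tuples ds \<and> ys \<in> tuples ds \<and>
          (\<forall>l < length ds. l \<notin> set J \<longrightarrow> xs ! l = ys ! l) \<and>
          enc (map (\<lambda>l. ds ! l) J) (map (\<lambda>l. xs ! l) J) = a \<and>
          enc (map (\<lambda>l. ds ! l) J) (map (\<lambda>l. ys ! l) J) = b}.
        \<rho> $$ (enc ds xs, enc ds ys)))"

text \<open>Contextual meaning of the occurrence at (0-based) position j of Level_i^gamma.\<close>
definition ctx :: "(form \<Rightarrow> nat \<Rightarrow> complex mat) \<Rightarrow> form \<Rightarrow> nat \<Rightarrow> nat \<Rightarrow> complex mat" where
  "ctx Hol \<gamma> i j = Red (map At (level \<gamma> i)) [j] (Hol \<gamma> i)"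

definition occs :: "form \<Rightarrow> form \<Rightarrow> (nat \<times> nat) set" where
  "occs \<gamma> \<beta> = {(i, j). 1 \<le> i \<and> i \<le> height \<gamma> \<and> j < length (level \<gamma> i) \<and> level \<gamma> i ! j = \<beta>}"

definition holistic :: "complex mat \<Rightarrow> (form \<Rightarrow> nat \<Rightarrow> complex mat) \<Rightarrow> bool" where
  "holistic T Hol \<longleftrightarrow>
     (\<forall>\<alpha> i. 1 \<le> i \<and> i \<le> height \<alpha> \<longrightarrow> density (2 ^ At \<alpha>) (Hol \<alpha> i)) \<and>
     (\<forall>\<alpha> i. 1 \<le> i \<and> i < height \<alpha> \<longrightarrow>
        Hol \<alpha> i = app_gate (level_gate T \<alpha> i) (Hol \<alpha> (Suc i))) \<and>
     (\<forall>\<gamma> \<beta> i j i' j'. (i, j) \<in> occs \<gamma> \<beta> \<and> (i', j') \<in> occs \<gamma> \<beta> \<longrightarrow>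
        ctx Hol \<gamma> i j = ctx Hol \<gamma> i' j') \<and>
     (\<forall>\<gamma> i j. (i, j) \<in> occs \<gamma> FF \<longrightarrow> ctx Hol \<gamma> i j = projP T 0 1) \<and>
     (\<forall>\<gamma> i j. (i, j) \<in> occs \<gamma> TT \<longrightarrow> ctx Hol \<gamma> i j = projP T 1 1)"

text \<open>Hol^gamma_T(beta): the common contextual meaning of the occurrences of beta in gamma.\<close>
definition Hol_sub :: "(form \<Rightarrow> nat \<Rightarrow> complex mat) \<Rightarrow> form \<Rightarrow> form \<Rightarrow> complex mat" where
  "Hol_sub Hol \<gamma> \<beta> = (let (i, j) = (SOME p. p \<in> occs \<gamma> \<beta>) in ctx Hol \<gamma> i j)"

end

theory Submission
  imports Defs
begin

lemma sum_split_mult: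
  fixes f :: "nat \<Rightarrow> 'a::comm_monoid_add"
  shows "sum f {..<P*M} = (\<Sum>p1<P. \<Sum>p2<M. f (p1*M+p2))"
proof (induction P)
  case 0 then show ?case by simp
next
  case (Suc P)
  have "{..<Suc P * M} = {..<P*M} \<union> {P*M..<P*M+M}" by auto
  moreover have "sum f {P*M..<P*M+M} = (\<Sum>p2<M. f (P*M+p2))"
  proof -
    have "{P*M..<P*M+M} = (\<lambda>p. P*M+p) ` {..<M}" by (simp add: lessThan_atLeast0 add.commute)
    then show ?thesis by (simp add: sum.reindex)
  qed
  ultimately show ?case using Suc by (simp add: sum.union_disjoint ivl_disj_int)
qed

lemma div_mod_lt: "(i::nat) < a*b \<Longrightarrow> i div b < a \<and> i mod b < b"
  by (metis less_mult_imp_div_less mod_less_divisor mult_zero_right not_gr_zero not_less_zero)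

lemma kron_carrier[simp]: "kron A B \<in> carrier_mat (dim_row A * dim_row B) (dim_col A * dim_col B)"
  by (simp add: kron_def)
lemma kron_dims[simp]: "dim_row (kron A B) = dim_row A * dim_row B" "dim_col (kron A B) = dim_col A * dim_col B"
  by (simp_all add: kron_def)

lemma kron_index:
  "i < dim_row A * dim_row B \<Longrightarrow> j < dim_col A * dim_col B \<Longrightarrow>
   kron A B $$ (i,j) = A $$ (i div dim_row B, j div dim_col B) * B $$ (i mod dim_row B, j mod dim_col B)"
  by (simp add: kron_def)

lemma adj_dims[simp]: "dim_row (adj A) = dim_col A" "dim_col (adj A) = dim_row A"
  by (simp_all add: adj_def)
lemma adj_index: "i < dim_col A \<Longrightarrow> j < dim_row A \<Longrightarrow> adj A $$ (i,j) = cnj (A $$ (j,i))"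
  by (simp add: adj_def)

lemma adj_kron: "adj (kron A B) = kron (adj A) (adj B)"
  apply (rule eq_matI)
  apply (auto simp: adj_def kron_def div_mod_lt)
  done

lemma adj_adj: "adj (adj A) = A"
  by (rule eq_matI) (auto simp: adj_def)

lemma adj_mult: "A \<in> carrier_mat a n \<Longrightarrow> B \<in> carrier_mat n b \<Longrightarrow> adj (A * B) = adj B * adj A"
  apply (rule eq_matI)
  apply (auto simp: adj_def scalar_prod_def row_def col_def)
  apply (rule sum.cong, auto simp: mult.commute)
  done

lemma kron_mult:
  assumes "A \<in> carrier_mat a n" "C \<in> carrier_mat n c" "B \<in> carrier_mat b m" "D \<in> carrier_mat m d"
  shows "kron A B * kron C D = kron (A*C) (B*D)"
proof (rule eq_matI)
  fix i j assume ij: "i < dim_row (kron (A*C) (B*D))" "j < dim_col (kron (A*C) (B*D))"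
  then have i: "i < a*b" and j: "j < c*d" using assms by auto
  have ib: "i div b < a" "i mod b < b" using i by (auto simp: less_mult_imp_div_less) (metis mod_less_divisor mult_zero_right not_gr_zero not_less_zero)
  have jd: "j div d < c" "j mod d < d" using j by (auto simp: less_mult_imp_div_less) (metis mod_less_divisor mult_zero_right not_gr_zero not_less_zero)
  have "(kron A B * kron C D) $$ (i,j) = (\<Sum>k<n*m. kron A B $$ (i,k) * kron C D $$ (k,j))"
    using assms i j by (simp add: scalar_prod_def row_def col_def lessThan_atLeast0)
  also have "\<dots> = (\<Sum>k1<n. \<Sum>k2<m. kron A B $$ (i,k1*m+k2) * kron C D $$ (k1*m+k2,j))"
    by (rule sum_split_mult)
  also have "\<dots> = (\<Sum>k1<n. \<Sum>k2<m. (A $$ (i div b, k1) * C $$ (k1, j div d)) * (B $$ (i mod b, k2) * D $$ (k2, j mod d)))"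
  proof (intro sum.cong refl)
    fix k1 k2 assume k: "k1 \<in> {..<n}" "k2 \<in> {..<m}"
    have km: "k1*m+k2 < n*m" using k
      by (metis lessThan_iff add.commute add_less_cancel_left less_le_trans mult.commute mult_le_mono2 mult_Suc_right Suc_leI)
    have "(k1*m+k2) div m = k1" "(k1*m+k2) mod m = k2" using k by auto
    then show "kron A B $$ (i,k1*m+k2) * kron C D $$ (k1*m+k2,j) = (A $$ (i div b, k1) * C $$ (k1, j div d)) * (B $$ (i mod b, k2) * D $$ (k2, j mod d))"
      using assms i j km by (simp add: kron_index)
  qed
  also have "\<dots> = (\<Sum>k1<n. A $$ (i div b, k1) * C $$ (k1, j div d)) * (\<Sum>k2<m. B $$ (i mod b, k2) * D $$ (k2, j mod d))"
    by (simp add: sum_product)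
  also have "\<dots> = kron (A*C) (B*D) $$ (i,j)"
    using assms i j ib jd by (simp add: kron_index scalar_prod_def row_def col_def lessThan_atLeast0)
  finally show "(kron A B * kron C D) $$ (i,j) = kron (A*C) (B*D) $$ (i,j)" .
qed (use assms in auto)

lemma kron_one: "0 < b \<Longrightarrow> kron (1\<^sub>m a) (1\<^sub>m b) = 1\<^sub>m (a*b)"
  apply (rule eq_matI)
  apply (auto simp: kron_def div_mod_lt)
  apply (metis div_mult_mod_eq)
  done

lemma dm3: "(i::nat) div (b*c) = i div c div b" "(i mod (b*c)) div c = (i div c) mod b" "(i mod (b*c)) mod c = i mod c"
  by (cases "c = 0"; simp add: div_mult2_eq mod_mult2_eq mult.commute[of b c])+

lemma kron_assoc: "kron A (kron B C) = kron (kron A B) C"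
  apply (rule eq_matI)
  apply (auto simp: kron_def div_mod_lt)
  subgoal for i j
  proof -
    assume i: "i < dim_row A * dim_row B * dim_row C" and j: "j < dim_col A * dim_col B * dim_col C"
    have bc: "i mod (dim_row B * dim_row C) < dim_row B * dim_row C" "j mod (dim_col B * dim_col C) < dim_col B * dim_col C"
      using i j by (metis div_mod_lt mult.assoc)+
    show ?thesis using bc
      by (simp add: dm3 mult.assoc)
  qed
  done


lemma sum_pull5:
  "(\<Sum>a\<in>A. \<Sum>p1\<in>B1. \<Sum>p2\<in>B2. \<Sum>q1\<in>B3. \<Sum>q2\<in>B4. f a p1 p2 q1 q2) =
   (\<Sum>p1\<in>B1. \<Sum>p2\<in>B2. \<Sum>q1\<in>B3. \<Sum>q2\<in>B4. \<Sum>a\<in>A. f a p1 p2 q1 q2)"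
proof -
  have "(\<Sum>a\<in>A. \<Sum>p1\<in>B1. \<Sum>p2\<in>B2. \<Sum>q1\<in>B3. \<Sum>q2\<in>B4. f a p1 p2 q1 q2) =
     (\<Sum>p1\<in>B1. \<Sum>a\<in>A. \<Sum>p2\<in>B2. \<Sum>q1\<in>B3. \<Sum>q2\<in>B4. f a p1 p2 q1 q2)" by (rule sum.swap)
  also have "\<dots> = (\<Sum>p1\<in>B1. \<Sum>p2\<in>B2. \<Sum>a\<in>A. \<Sum>q1\<in>B3. \<Sum>q2\<in>B4. f a p1 p2 q1 q2)"
    by (intro sum.cong refl, rule sum.swap)
  also have "\<dots> = (\<Sum>p1\<in>B1. \<Sum>p2\<in>B2. \<Sum>q1\<in>B3. \<Sum>a\<in>A. \<Sum>q2\<in>B4. f a p1 p2 q1 q2)"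
    by (intro sum.cong refl, rule sum.swap)
  also have "\<dots> = (\<Sum>p1\<in>B1. \<Sum>p2\<in>B2. \<Sum>q1\<in>B3. \<Sum>q2\<in>B4. \<Sum>a\<in>A. f a p1 p2 q1 q2)"
    by (intro sum.cong refl, rule sum.swap)
  finally show ?thesis .
qed

lemma unitary_col:
  assumes "U \<in> carrier_mat P P" "adj U * U = 1\<^sub>m P" "p < P" "q < P"
  shows "(\<Sum>a<P. U $$ (a,p) * cnj (U $$ (a,q))) = (if p = q then 1 else 0)"
proof -
  have "(adj U * U) $$ (q,p) = (\<Sum>a<P. cnj (U $$ (a,q)) * U $$ (a,p))"
    using assms(1,3,4) by (simp add: scalar_prod_def row_def col_def adj_index lessThan_atLeast0)
  then have "(\<Sum>a<P. cnj (U $$ (a,q)) * U $$ (a,p)) = (if q = p then 1 else 0)"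
    using assms by simp
  then show ?thesis by (simp add: mult.commute eq_commute[of p q])
qed

lemma triple_entry:
  assumes "K \<in> carrier_mat n n" "\<rho> \<in> carrier_mat n n" "r < n" "s < n"
  shows "(K * \<rho> * adj K) $$ (r,s) = (\<Sum>p<n. \<Sum>q<n. K $$ (r,p) * \<rho> $$ (p,q) * cnj (K $$ (s,q)))"
proof -
  have "(K * \<rho> * adj K) $$ (r,s) = (\<Sum>q<n. (K*\<rho>) $$ (r,q) * cnj (K $$ (s,q)))"
    using assms by (simp add: scalar_prod_def row_def col_def adj_def lessThan_atLeast0)
  also have "\<dots> = (\<Sum>q<n. \<Sum>p<n. K $$ (r,p) * \<rho> $$ (p,q) * cnj (K $$ (s,q)))"
    using assms by (simp add: scalar_prod_def row_def col_def lessThan_atLeast0 sum_distrib_right)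
  also have "\<dots> = (\<Sum>p<n. \<Sum>q<n. K $$ (r,p) * \<rho> $$ (p,q) * cnj (K $$ (s,q)))"
    by (rule sum.swap)
  finally show ?thesis .
qed

definition ptrL :: "nat \<Rightarrow> nat \<Rightarrow> complex mat \<Rightarrow> complex mat" where
  "ptrL P M \<rho> = mat M M (\<lambda>(x,y). \<Sum>a<P. \<rho> $$ (a*M+x, a*M+y))"
definition ptrR :: "nat \<Rightarrow> nat \<Rightarrow> complex mat \<Rightarrow> complex mat" where
  "ptrR M P \<rho> = mat M M (\<lambda>(x,y). \<Sum>b<P. \<rho> $$ (x*P+b, y*P+b))"

lemma ptrL_carrier: "ptrL P M \<rho> \<in> carrier_mat M M" by (simp add: ptrL_def)
lemma ptrR_carrier: "ptrR M P \<rho> \<in> carrier_mat M M" by (simp add: ptrR_def)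

lemma idx_lt: "(a::nat) < P \<Longrightarrow> x < M \<Longrightarrow> a*M+x < P*M"
  by (metis add.commute add_less_cancel_left less_le_trans mult_Suc mult_le_mono1 Suc_leI)

lemma ptrL_conj:
  assumes U: "U \<in> carrier_mat P P" "adj U * U = 1\<^sub>m P" and V: "V \<in> carrier_mat M M"
    and r: "\<rho> \<in> carrier_mat (P*M) (P*M)"
  shows "ptrL P M (kron U V * \<rho> * adj (kron U V)) = V * ptrL P M \<rho> * adj V"
proof (rule eq_matI)
  fix x y assume "x < dim_row (V * ptrL P M \<rho> * adj V)" "y < dim_col (V * ptrL P M \<rho> * adj V)"
  then have x: "x < M" and y: "y < M" using V by (auto simp: ptrL_def)
  let ?K = "kron U V"
  have K: "?K \<in> carrier_mat (P*M) (P*M)" using U V by auto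
  let ?g = "\<lambda>p1 p2 q1 q2. V $$ (x,p2) * \<rho> $$ (p1*M+p2, q1*M+q2) * cnj (V $$ (y,q2))"
  have "ptrL P M (?K * \<rho> * adj ?K) $$ (x,y) = (\<Sum>a<P. (?K * \<rho> * adj ?K) $$ (a*M+x, a*M+y))"
    using x y by (simp add: ptrL_def)
  also have "\<dots> = (\<Sum>a<P. \<Sum>p<P*M. \<Sum>q<P*M. ?K $$ (a*M+x,p) * \<rho> $$ (p,q) * cnj (?K $$ (a*M+y,q)))"
    using K r x y by (intro sum.cong[OF refl] triple_entry) (auto intro: idx_lt)
  also have "\<dots> = (\<Sum>a<P. \<Sum>p1<P. \<Sum>p2<M. \<Sum>q1<P. \<Sum>q2<M. (U $$ (a,p1) * cnj (U $$ (a,q1))) * ?g p1 p2 q1 q2)"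
  proof (rule sum.cong[OF refl])
    fix a assume a: "a \<in> {..<P}"
    show "(\<Sum>p<P*M. \<Sum>q<P*M. ?K $$ (a*M+x,p) * \<rho> $$ (p,q) * cnj (?K $$ (a*M+y,q))) =
      (\<Sum>p1<P. \<Sum>p2<M. \<Sum>q1<P. \<Sum>q2<M. (U $$ (a,p1) * cnj (U $$ (a,q1))) * ?g p1 p2 q1 q2)"
      unfolding sum_split_mult
      apply (intro sum.cong refl)
      using U V a x y by (simp add: kron_index idx_lt)
  qed
  also have "\<dots> = (\<Sum>p1<P. \<Sum>p2<M. \<Sum>q1<P. \<Sum>q2<M. \<Sum>a<P. (U $$ (a,p1) * cnj (U $$ (a,q1))) * ?g p1 p2 q1 q2)"
    by (rule sum_pull5)
  also have "\<dots> = (\<Sum>p1<P. \<Sum>p2<M. \<Sum>q1<P. \<Sum>q2<M. (if p1 = q1 then ?g p1 p2 q1 q2 else 0))"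
    by (intro sum.cong refl) (simp add: sum_distrib_right[symmetric] unitary_col[OF U])
  also have "\<dots> = (\<Sum>p1<P. \<Sum>p2<M. \<Sum>q2<M. ?g p1 p2 p1 q2)"
  proof (rule sum.cong[OF refl], rule sum.cong[OF refl])
    fix p1 p2 assume "p1 \<in> {..<P}"
    then show "(\<Sum>q1<P. \<Sum>q2<M. (if p1 = q1 then ?g p1 p2 q1 q2 else 0)) = (\<Sum>q2<M. ?g p1 p2 p1 q2)"
    proof -
      assume p1: "p1 \<in> {..<P}"
      have "(\<Sum>q1<P. \<Sum>q2<M. (if p1 = q1 then ?g p1 p2 q1 q2 else 0)) =
            (\<Sum>q1<P. if p1 = q1 then (\<Sum>q2<M. ?g p1 p2 q1 q2) else 0)"
        by (rule sum.cong[OF refl]) simp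
      also have "\<dots> = (\<Sum>q2<M. ?g p1 p2 p1 q2)" using p1 by (simp add: sum.delta)
      finally show ?thesis .
    qed
  qed
  also have "\<dots> = (\<Sum>p2<M. \<Sum>q2<M. \<Sum>p1<P. ?g p1 p2 p1 q2)"
  proof -
    have "(\<Sum>p1<P. \<Sum>p2<M. \<Sum>q2<M. ?g p1 p2 p1 q2) = (\<Sum>p2<M. \<Sum>p1<P. \<Sum>q2<M. ?g p1 p2 p1 q2)"
      by (rule sum.swap)
    also have "\<dots> = (\<Sum>p2<M. \<Sum>q2<M. \<Sum>p1<P. ?g p1 p2 p1 q2)"
      by (rule sum.cong[OF refl], rule sum.swap)
    finally show ?thesis .
  qed
  also have "\<dots> = (V * ptrL P M \<rho> * adj V) $$ (x,y)"
    unfolding triple_entry[OF V ptrL_carrier x y]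
    by (intro sum.cong refl) (simp add: ptrL_def sum_distrib_left sum_distrib_right mult.assoc)
  finally show "ptrL P M (?K * \<rho> * adj ?K) $$ (x,y) = (V * ptrL P M \<rho> * adj V) $$ (x,y)" .
qed (use V in \<open>auto simp: ptrL_def\<close>)


lemma ptrR_conj:
  assumes U: "U \<in> carrier_mat P P" "adj U * U = 1\<^sub>m P" and V: "V \<in> carrier_mat M M"
    and r: "\<rho> \<in> carrier_mat (M*P) (M*P)"
  shows "ptrR M P (kron V U * \<rho> * adj (kron V U)) = V * ptrR M P \<rho> * adj V"
proof (rule eq_matI)
  fix x y assume "x < dim_row (V * ptrR M P \<rho> * adj V)" "y < dim_col (V * ptrR M P \<rho> * adj V)"
  then have x: "x < M" and y: "y < M" using V by (auto simp: ptrR_def)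
  let ?K = "kron V U"
  have K: "?K \<in> carrier_mat (M*P) (M*P)" using U V by auto
  let ?g = "\<lambda>p1 p2 q1 q2. V $$ (x,p1) * \<rho> $$ (p1*P+p2, q1*P+q2) * cnj (V $$ (y,q1))"
  have "ptrR M P (?K * \<rho> * adj ?K) $$ (x,y) = (\<Sum>b<P. (?K * \<rho> * adj ?K) $$ (x*P+b, y*P+b))"
    using x y by (simp add: ptrR_def)
  also have "\<dots> = (\<Sum>b<P. \<Sum>p<M*P. \<Sum>q<M*P. ?K $$ (x*P+b,p) * \<rho> $$ (p,q) * cnj (?K $$ (y*P+b,q)))"
    using K r x y by (intro sum.cong[OF refl] triple_entry) (auto intro: idx_lt)
  also have "\<dots> = (\<Sum>b<P. \<Sum>p1<M. \<Sum>p2<P. \<Sum>q1<M. \<Sum>q2<P. (U $$ (b,p2) * cnj (U $$ (b,q2))) * ?g p1 p2 q1 q2)"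
  proof (rule sum.cong[OF refl])
    fix b assume b: "b \<in> {..<P}"
    show "(\<Sum>p<M*P. \<Sum>q<M*P. ?K $$ (x*P+b,p) * \<rho> $$ (p,q) * cnj (?K $$ (y*P+b,q))) =
      (\<Sum>p1<M. \<Sum>p2<P. \<Sum>q1<M. \<Sum>q2<P. (U $$ (b,p2) * cnj (U $$ (b,q2))) * ?g p1 p2 q1 q2)"
      unfolding sum_split_mult
      apply (intro sum.cong refl)
      using U V b x y by (simp add: kron_index idx_lt)
  qed
  also have "\<dots> = (\<Sum>p1<M. \<Sum>p2<P. \<Sum>q1<M. \<Sum>q2<P. \<Sum>b<P. (U $$ (b,p2) * cnj (U $$ (b,q2))) * ?g p1 p2 q1 q2)"
    by (rule sum_pull5)
  also have "\<dots> = (\<Sum>p1<M. \<Sum>p2<P. \<Sum>q1<M. \<Sum>q2<P. (if p2 = q2 then ?g p1 p2 q1 q2 else 0))"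
    by (intro sum.cong refl) (simp add: sum_distrib_right[symmetric] unitary_col[OF U])
  also have "\<dots> = (\<Sum>p1<M. \<Sum>p2<P. \<Sum>q1<M. ?g p1 p2 q1 p2)"
    by (intro sum.cong refl) (simp add: sum.delta)
  also have "\<dots> = (\<Sum>p1<M. \<Sum>q1<M. \<Sum>p2<P. ?g p1 p2 q1 p2)"
    by (rule sum.cong[OF refl], rule sum.swap)
  also have "\<dots> = (V * ptrR M P \<rho> * adj V) $$ (x,y)"
    unfolding triple_entry[OF V ptrR_carrier x y]
    by (intro sum.cong refl) (simp add: ptrR_def sum_distrib_left sum_distrib_right mult.assoc)
  finally show "ptrR M P (?K * \<rho> * adj ?K) $$ (x,y) = (V * ptrR M P \<rho> * adj V) $$ (x,y)" .
qed (use V in \<open>auto simp: ptrR_def\<close>)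

lemma ptr3_conj:
  assumes U: "U \<in> carrier_mat PA PA" "adj U * U = 1\<^sub>m PA"
    and W: "W \<in> carrier_mat PB PB" "adj W * W = 1\<^sub>m PB"
    and G: "G \<in> carrier_mat D D"
    and r: "\<rho> \<in> carrier_mat (PA*(D*PB)) (PA*(D*PB))"
  shows "ptrR D PB (ptrL PA (D*PB) (kron U (kron G W) * \<rho> * adj (kron U (kron G W))))
       = G * ptrR D PB (ptrL PA (D*PB) \<rho>) * adj G"
proof -
  have GW: "kron G W \<in> carrier_mat (D*PB) (D*PB)" using G W by auto
  show ?thesis
    using ptrL_conj[OF U GW r] ptrR_conj[OF W G ptrL_carrier] by simp
qed


lemma tuples_la2: "tuples ds = {xs. list_all2 (\<lambda>x d. x < d) xs ds}"
  by (auto simp: tuples_def list_all2_conv_all_nth)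

lemma tuples_Cons: "(x#xs) \<in> tuples (d#ds) \<longleftrightarrow> x < d \<and> xs \<in> tuples ds"
  by (simp add: tuples_la2)
lemma tuples_Nil: "xs \<in> tuples [] \<longleftrightarrow> xs = []"
  by (simp add: tuples_la2)
lemma tuples_Cons2: "xs \<in> tuples (d#ds) \<longleftrightarrow> (\<exists>y ys. xs = y#ys \<and> y < d \<and> ys \<in> tuples ds)"
  by (cases xs) (auto simp: tuples_la2)
lemma tuples_length: "xs \<in> tuples ds \<Longrightarrow> length xs = length ds"
  by (simp add: tuples_def)

lemma enc_foldl: "length ds = length xs \<Longrightarrow>
  foldl (\<lambda>acc (d, x). acc * d + x) acc (zip ds xs) = acc * prod_list ds + enc ds xs"
proof (induction ds arbitrary: xs acc)
  case Nil then show ?case by (simp add: enc_def)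
next
  case (Cons d ds)
  then obtain x xs' where xs: "xs = x # xs'" and l: "length ds = length xs'" by (cases xs) auto
  have "enc (d#ds) xs = x * prod_list ds + enc ds xs'"
    using Cons.IH[OF l, of x] by (simp add: enc_def xs)
  then show ?case using Cons.IH[OF l, of "acc*d+x"] by (simp add: xs algebra_simps)
qed

lemma enc_Cons: "length ds = length xs \<Longrightarrow> enc (d#ds) (x#xs) = x * prod_list ds + enc ds xs"
  using enc_foldl[of ds xs x] by (simp add: enc_def)

lemma enc_append: "length ds1 = length xs1 \<Longrightarrow> length ds2 = length xs2 \<Longrightarrow>
   enc (ds1 @ ds2) (xs1 @ xs2) = enc ds1 xs1 * prod_list ds2 + enc ds2 xs2"
  using enc_foldl[of ds2 xs2 "enc ds1 xs1"] by (simp add: enc_def)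

lemma enc_lt: "xs \<in> tuples ds \<Longrightarrow> enc ds xs < prod_list ds"
proof (induction ds arbitrary: xs)
  case Nil then show ?case by (simp add: tuples_Nil enc_def)
next
  case (Cons d ds)
  then obtain y ys where xs: "xs = y#ys" "y < d" "ys \<in> tuples ds" by (auto simp: tuples_Cons2)
  have "enc ds ys < prod_list ds" using Cons.IH xs by auto
  then have "y * prod_list ds + enc ds ys < d * prod_list ds"
    by (metis xs(2) add.commute idx_lt mult.commute)
  then show ?case using xs tuples_length[OF xs(3)] by (simp add: enc_Cons)
qed

lemma enc_inj: "inj_on (enc ds) (tuples ds)"
proof (induction ds)
  case Nil then show ?case by (simp add: tuples_Nil inj_on_def)
next
  case (Cons d ds)
  show ?case
  proof (rule inj_onI)
    fix xs zs assume xs: "xs \<in> tuples (d#ds)" and zs: "zs \<in> tuples (d#ds)" and e: "enc (d#ds) xs = enc (d#ds) zs"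
    obtain y ys where y: "xs = y#ys" "y < d" "ys \<in> tuples ds" using xs by (auto simp: tuples_Cons2)
    obtain z zs' where z: "zs = z#zs'" "z < d" "zs' \<in> tuples ds" using zs by (auto simp: tuples_Cons2)
    have l1: "enc ds ys < prod_list ds" and l2: "enc ds zs' < prod_list ds" using y z enc_lt by auto
    have eq: "y * prod_list ds + enc ds ys = z * prod_list ds + enc ds zs'"
      using e y z tuples_length by (simp add: enc_Cons)
    have "(y * prod_list ds + enc ds ys) div prod_list ds = y" "(y * prod_list ds + enc ds ys) mod prod_list ds = enc ds ys"
      using l1 by auto
    moreover have "(z * prod_list ds + enc ds zs') div prod_list ds = z" "(z * prod_list ds + enc ds zs') mod prod_list ds = enc ds zs'"
      using l2 by auto
    ultimately have "y = z" "enc ds ys = enc ds zs'" using eq by metis+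
    then have "ys = zs'" using Cons.IH y z by (auto dest: inj_onD)
    then show "xs = zs" using y z \<open>y = z\<close> by simp
  qed
qed

lemma enc_surj: "n < prod_list ds \<Longrightarrow> \<exists>xs \<in> tuples ds. enc ds xs = n"
proof (induction ds arbitrary: n)
  case Nil then show ?case by (simp add: tuples_Nil enc_def)
next
  case (Cons d ds)
  have P: "prod_list ds > 0" using Cons.prems by (auto intro: gr0I)
  have "n mod prod_list ds < prod_list ds" using P by auto
  then obtain ys where ys: "ys \<in> tuples ds" "enc ds ys = n mod prod_list ds" using Cons.IH by blast
  have "n div prod_list ds < d" using Cons.prems by (simp add: less_mult_imp_div_less)
  then have "(n div prod_list ds) # ys \<in> tuples (d#ds)" using ys by (simp add: tuples_Cons)
  moreover have "enc (d#ds) ((n div prod_list ds) # ys) = n"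
    using ys tuples_length[OF ys(1)] by (simp add: enc_Cons)
  ultimately show ?case by blast
qed

lemma enc_bij: "bij_betw (enc ds) (tuples ds) {..<prod_list ds}"
  unfolding bij_betw_def using enc_inj enc_lt enc_surj by fastforce


lemma tuples_append: "xs \<in> tuples (d1 @ d2) \<longleftrightarrow> (\<exists>p s. xs = p @ s \<and> p \<in> tuples d1 \<and> s \<in> tuples d2)"
  unfolding tuples_la2 mem_Collect_eq list_all2_append2 by (auto simp: tuples_la2 dest: list_all2_lengthD)

lemma tuples_app: "p \<in> tuples d1 \<Longrightarrow> s \<in> tuples d2 \<Longrightarrow> p @ s \<in> tuples (d1 @ d2)"
  by (auto simp: tuples_def nth_append)

lemma map_nth_block: "length p = k \<Longrightarrow> length t = m \<Longrightarrow> map (\<lambda>l. (p@t@s) ! l) [k..<k+m] = t"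
  by (rule nth_equalityI) (auto simp: nth_append)

lemma outside_eq:
  assumes "length p = k" "length t = m" "length p' = k" "length t' = m" "length s = length s'"
  shows "(\<forall>l < k+m+length s. l \<notin> set [k..<k+m] \<longrightarrow> (p@t@s) ! l = (p'@t'@s') ! l) \<longleftrightarrow> p = p' \<and> s = s'"
proof
  assume H: "\<forall>l < k+m+length s. l \<notin> set [k..<k+m] \<longrightarrow> (p@t@s) ! l = (p'@t'@s') ! l"
  have "p = p'"
  proof (rule nth_equalityI)
    fix i assume "i < length p"
    then show "p ! i = p' ! i" using H[rule_format, of i] assms by (auto simp: nth_append)
  qed (use assms in simp)
  moreover have "s = s'"
  proof (rule nth_equalityI)
    fix i assume "i < length s"
    then show "s ! i = s' ! i" using H[rule_format, of "k+m+i"] assms by (auto simp: nth_append)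
  qed (use assms in simp)
  ultimately show "p = p' \<and> s = s'" by simp
next
  assume "p = p' \<and> s = s'"
  then show "\<forall>l < k+m+length s. l \<notin> set [k..<k+m] \<longrightarrow> (p@t@s) ! l = (p'@t'@s') ! l"
    using assms by (auto simp: nth_append)
qed

lemma tuples3: "xs \<in> tuples (pre @ blk @ suf) \<Longrightarrow>
   \<exists>p t s. xs = p @ t @ s \<and> p \<in> tuples pre \<and> t \<in> tuples blk \<and> s \<in> tuples suf"
  unfolding tuples_append by blast


definition Sset :: "nat list \<Rightarrow> nat \<Rightarrow> nat \<Rightarrow> nat \<Rightarrow> nat \<Rightarrow> (nat list \<times> nat list) set" where
  "Sset ds k m a b = {(xs, ys). xs \<in> tuples ds \<and> ys \<in> tuples ds \<and>
          (\<forall>l < length ds. l \<notin> set [k..<k+m] \<longrightarrow> xs ! l = ys ! l) \<and>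
          enc (map (\<lambda>l. ds ! l) [k..<k+m]) (map (\<lambda>l. xs ! l) [k..<k+m]) = a \<and>
          enc (map (\<lambda>l. ds ! l) [k..<k+m]) (map (\<lambda>l. ys ! l) [k..<k+m]) = b}"

lemma Sset_D:
  assumes "(xs,ys) \<in> Sset (pre @ blk @ suf) (length pre) (length blk) a b"
  shows "\<exists>p t t' s. xs = p@t@s \<and> ys = p@t'@s \<and> p \<in> tuples pre \<and> t \<in> tuples blk \<and> t' \<in> tuples blk
     \<and> s \<in> tuples suf \<and> enc blk t = a \<and> enc blk t' = b"
proof -
  let ?k = "length pre" and ?m = "length blk"
  from assms have xs: "xs \<in> tuples (pre @ blk @ suf)" and ys: "ys \<in> tuples (pre @ blk @ suf)"
    and out: "\<forall>l < length (pre @ blk @ suf). l \<notin> set [?k..<?k+?m] \<longrightarrow> xs ! l = ys ! l"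
    and ea: "enc (map (\<lambda>l. (pre @ blk @ suf) ! l) [?k..<?k+?m]) (map (\<lambda>l. xs ! l) [?k..<?k+?m]) = a"
    and eb: "enc (map (\<lambda>l. (pre @ blk @ suf) ! l) [?k..<?k+?m]) (map (\<lambda>l. ys ! l) [?k..<?k+?m]) = b"
    by (auto simp: Sset_def)
  obtain p t s where x: "xs = p@t@s" "p \<in> tuples pre" "t \<in> tuples blk" "s \<in> tuples suf" using tuples3[OF xs] by blast
  obtain p' t' s' where y: "ys = p'@t'@s'" "p' \<in> tuples pre" "t' \<in> tuples blk" "s' \<in> tuples suf" using tuples3[OF ys] by blast
  note L = tuples_length[OF x(2)] tuples_length[OF x(3)] tuples_length[OF x(4)]
     tuples_length[OF y(2)] tuples_length[OF y(3)] tuples_length[OF y(4)]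
  have bl: "map (\<lambda>l. (pre @ blk @ suf) ! l) [?k..<?k+?m] = blk" by (rule map_nth_block) auto
  have "p = p' \<and> s = s'"
    using outside_eq[of p ?k t ?m p' t' s s'] out L x(1) y(1) by auto
  moreover have "enc blk t = a" using ea bl map_nth_block[of p ?k t ?m s] L x(1) by simp
  moreover have "enc blk t' = b" using eb bl map_nth_block[of p' ?k t' ?m s'] L y(1) by simp
  ultimately show ?thesis using x y by blast
qed

lemma Sset_I:
  assumes "p \<in> tuples pre" "t \<in> tuples blk" "t' \<in> tuples blk" "s \<in> tuples suf" "enc blk t = a" "enc blk t' = b"
  shows "(p@t@s, p@t'@s) \<in> Sset (pre @ blk @ suf) (length pre) (length blk) a b"
proof -
  note L = tuples_length[OF assms(1)] tuples_length[OF assms(2)] tuples_length[OF assms(3)] tuples_length[OF assms(4)]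
  have bl: "map (\<lambda>l. (pre @ blk @ suf) ! l) [length pre..<length pre+length blk] = blk" by (rule map_nth_block) auto
  have "\<forall>l < length pre + length blk + length s. l \<notin> set [length pre..<length pre+length blk] \<longrightarrow> (p@t@s) ! l = (p@t'@s) ! l"
    using outside_eq[of p "length pre" t "length blk" p t' s s] L by auto
  then show ?thesis using assms L bl map_nth_block[of p "length pre" t "length blk" s] map_nth_block[of p "length pre" t' "length blk" s]
    by (auto simp: Sset_def tuples_app)
qed

lemma Red_sum:
  fixes \<rho> :: "complex mat"
  assumes a: "a < prod_list blk" and b: "b < prod_list blk"
  shows "(\<Sum>(xs, ys) \<in> Sset (pre @ blk @ suf) (length pre) (length blk) a b. \<rho> $$ (enc (pre @ blk @ suf) xs, enc (pre @ blk @ suf) ys))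
    = (\<Sum>u<prod_list pre. \<Sum>w<prod_list suf.
         \<rho> $$ ((u * prod_list blk + a) * prod_list suf + w, (u * prod_list blk + b) * prod_list suf + w))"
proof -
  let ?S = "Sset (pre @ blk @ suf) (length pre) (length blk) a b"
  let ?dp = "inv_into (tuples pre) (enc pre)" and ?dsf = "inv_into (tuples suf) (enc suf)"
  let ?ta = "inv_into (tuples blk) (enc blk) a" and ?tb = "inv_into (tuples blk) (enc blk) b"
  let ?k = "length pre" and ?m = "length blk"
  have bp: "bij_betw (enc pre) (tuples pre) {..<prod_list pre}" and bb: "bij_betw (enc blk) (tuples blk) {..<prod_list blk}"
    and bs: "bij_betw (enc suf) (tuples suf) {..<prod_list suf}" by (rule enc_bij)+
  have inv1: "\<And>ds u. u < prod_list ds \<Longrightarrow> inv_into (tuples ds) (enc ds) u \<in> tuples ds \<and> enc ds (inv_into (tuples ds) (enc ds) u) = u"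
  proof -
    fix ds u assume "u < prod_list (ds::nat list)"
    then have "u \<in> enc ds ` tuples ds" using bij_betw_imp_surj_on[OF enc_bij[of ds]] by auto
    then show "inv_into (tuples ds) (enc ds) u \<in> tuples ds \<and> enc ds (inv_into (tuples ds) (enc ds) u) = u"
      by (simp add: inv_into_into f_inv_into_f)
  qed
  have inv2: "\<And>ds p. p \<in> tuples ds \<Longrightarrow> inv_into (tuples ds) (enc ds) (enc ds p) = p"
    by (simp add: enc_inj inv_into_f_f)
  have ta: "?ta \<in> tuples blk" "enc blk ?ta = a" and tb: "?tb \<in> tuples blk" "enc blk ?tb = b" using inv1 a b by auto
  define i where "i = (\<lambda>(u::nat, w::nat). (?dp u @ ?ta @ ?dsf w, ?dp u @ ?tb @ ?dsf w))"
  define j where "j = (\<lambda>(xs::nat list, ys::nat list). (enc pre (take ?k xs), enc suf (drop (?k + ?m) xs)))"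
  let ?h = "\<lambda>(u,w). \<rho> $$ ((u * prod_list blk + a) * prod_list suf + w, (u * prod_list blk + b) * prod_list suf + w)"
  have "(\<Sum>(xs, ys) \<in> ?S. \<rho> $$ (enc (pre @ blk @ suf) xs, enc (pre @ blk @ suf) ys)) = sum ?h ({..<prod_list pre} \<times> {..<prod_list suf})"
  proof (rule sum.reindex_bij_witness[where i = i and j = j])
    fix z assume z: "z \<in> ?S"
    obtain xs ys where zz: "z = (xs,ys)" by force
    obtain p t t' s where D: "xs = p@t@s" "ys = p@t'@s" "p \<in> tuples pre" "t \<in> tuples blk" "t' \<in> tuples blk"
      "s \<in> tuples suf" "enc blk t = a" "enc blk t' = b"
    proof -
      have "(xs,ys) \<in> ?S" using z zz by simp
      from Sset_D[OF this] show ?thesis using that by blast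
    qed
    note L = tuples_length[OF D(3)] tuples_length[OF D(4)] tuples_length[OF D(5)] tuples_length[OF D(6)]
    have jz: "j z = (enc pre p, enc suf s)" using D L zz by (simp add: j_def)
    have "?ta = t" using inv2[OF D(4)] D(7) by simp
    moreover have "?tb = t'" using inv2[OF D(5)] D(8) by simp
    ultimately show "i (j z) = z" using jz D(1,2) inv2[OF D(3)] inv2[OF D(6)] zz by (simp add: i_def)
    show "j z \<in> {..<prod_list pre} \<times> {..<prod_list suf}" using jz D enc_lt by auto
    show "?h (j z) = (case z of (xs, ys) \<Rightarrow> \<rho> $$ (enc (pre @ blk @ suf) xs, enc (pre @ blk @ suf) ys))"
      using jz D L zz by (simp add: enc_append algebra_simps)
  next
    fix z assume z: "z \<in> {..<prod_list pre} \<times> {..<prod_list suf}"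
    obtain u w where zz: "z = (u,w)" by force
    have u: "?dp u \<in> tuples pre" "enc pre (?dp u) = u" and w: "?dsf w \<in> tuples suf" "enc suf (?dsf w) = w"
      using inv1 z zz by auto
    note L = tuples_length[OF u(1)] tuples_length[OF ta(1)] tuples_length[OF w(1)]
    show "j (i z) = z" using zz u w L by (simp add: i_def j_def)
    show "i z \<in> ?S" using zz Sset_I[OF u(1) ta(1) tb(1) w(1) ta(2) tb(2)] by (simp add: i_def)
  qed
  also have "\<dots> = (\<Sum>u<prod_list pre. \<Sum>w<prod_list suf.
         \<rho> $$ ((u * prod_list blk + a) * prod_list suf + w, (u * prod_list blk + b) * prod_list suf + w))"
    by (simp add: sum.cartesian_product)
  finally show ?thesis .
qed


lemma prod_pow: "prod_list (map (\<lambda>n. (2::nat) ^ n) xs) = 2 ^ sum_list xs"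
  by (induction xs) (auto simp: power_add)

lemma Red_block:
  fixes \<rho> :: "complex mat"
  assumes km: "k + m \<le> length ns"
  defines "PA \<equiv> 2 ^ sum_list (take k ns)" and "D \<equiv> 2 ^ sum_list (take m (drop k ns))"
    and "PB \<equiv> 2 ^ sum_list (drop (k+m) ns)"
  shows "Red ns [k..<k+m] \<rho> = ptrR D PB (ptrL PA (D*PB) \<rho>)"
proof -
  define ds where "ds = map (\<lambda>n. (2::nat) ^ n) ns"
  define pre where "pre = take k ds"
  define blk where "blk = take m (drop k ds)"
  define suf where "suf = drop (k+m) ds"
  have dsd: "ds = pre @ blk @ suf" unfolding pre_def blk_def suf_def
    by (metis append_take_drop_id drop_drop add.commute)
  have lp: "length pre = k" and lb: "length blk = m" using km by (auto simp: pre_def blk_def ds_def)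
  have PA: "prod_list pre = PA" unfolding PA_def pre_def ds_def by (simp add: take_map prod_pow)
  have DD: "prod_list blk = D" unfolding D_def blk_def ds_def by (simp add: take_map drop_map prod_pow)
  have PB: "prod_list suf = PB" unfolding PB_def suf_def ds_def by (simp add: drop_map prod_pow)
  have bl: "map (\<lambda>l. ds ! l) [k..<k+m] = blk" unfolding dsd using lp lb by (intro map_nth_block) auto
  show ?thesis
  proof (rule eq_matI)
    fix a b assume "a < dim_row (ptrR D PB (ptrL PA (D*PB) \<rho>))" "b < dim_col (ptrR D PB (ptrL PA (D*PB) \<rho>))"
    then have a: "a < D" and b: "b < D" by (auto simp: ptrR_def)
    have "Red ns [k..<k+m] \<rho> $$ (a,b) = (\<Sum>(xs, ys) \<in> Sset ds k m a b. \<rho> $$ (enc ds xs, enc ds ys))"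
      using a b bl DD unfolding Red_def Let_def Sset_def ds_def[symmetric] by simp
    also have "\<dots> = (\<Sum>u<PA. \<Sum>w<PB. \<rho> $$ ((u * D + a) * PB + w, (u * D + b) * PB + w))"
      using Red_sum[of a blk b \<rho> pre suf] a b dsd lp lb PA DD PB by simp
    also have "\<dots> = (\<Sum>w<PB. \<Sum>u<PA. \<rho> $$ (u * (D*PB) + (a*PB+w), u * (D*PB) + (b * PB + w)))"
      by (subst sum.swap) (simp add: algebra_simps)
    also have "\<dots> = ptrR D PB (ptrL PA (D*PB) \<rho>) $$ (a,b)"
      using a b by (simp add: ptrR_def ptrL_def idx_lt)
    finally show "Red ns [k..<k+m] \<rho> $$ (a,b) = ptrR D PB (ptrL PA (D*PB) \<rho>) $$ (a,b)" .
  qed (auto simp: Red_def Let_def ptrR_def DD[symmetric] bl[unfolded ds_def])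
qed


definition uni :: "nat \<Rightarrow> complex mat \<Rightarrow> bool" where
  "uni d U \<longleftrightarrow> U \<in> carrier_mat d d \<and> adj U * U = 1\<^sub>m d"

lemma kron_one': "kron (1\<^sub>m a) (1\<^sub>m b) = 1\<^sub>m (a*b)"
proof (cases "b = 0")
  case True then show ?thesis by (intro eq_matI) auto
next
  case False then show ?thesis by (simp add: kron_one)
qed

lemma adj_one: "adj (1\<^sub>m n) = 1\<^sub>m n"
  by (rule eq_matI) (auto simp: adj_def)

lemma adj_carrier: "A \<in> carrier_mat m n \<Longrightarrow> adj A \<in> carrier_mat n m"
  by (auto simp: carrier_matD intro!: carrier_matI)

lemma uni_kron: "uni a A \<Longrightarrow> uni b B \<Longrightarrow> uni (a*b) (kron A B)"
proof -
  assume "uni a A" "uni b B"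
  then have A: "A \<in> carrier_mat a a" "adj A * A = 1\<^sub>m a" and B: "B \<in> carrier_mat b b" "adj B * B = 1\<^sub>m b"
    by (auto simp: uni_def)
  have "kron A B \<in> carrier_mat (a*b) (a*b)" using A B by (metis kron_carrier carrier_matD)
  moreover have "adj (kron A B) * kron A B = 1\<^sub>m (a*b)"
    using A B by (simp add: adj_kron kron_mult[OF adj_carrier[OF A(1)] A(1) adj_carrier[OF B(1)] B(1)] kron_one')
  ultimately show ?thesis by (simp add: uni_def)
qed

lemma uni_kron_list: "(\<And>x. x \<in> set xs \<Longrightarrow> uni (f x) (g x)) \<Longrightarrow> uni (prod_list (map f xs)) (kron_list (map g xs))"
proof (induction xs)
  case Nil then show ?case by (simp add: uni_def kron_list_def adj_one)
next
  case (Cons x xs) then show ?case by (simp add: kron_list_def uni_kron)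
qed

lemma adj_kron_list: "adj (kron_list As) = kron_list (map adj As)"
  by (induction As) (simp_all add: kron_list_def adj_one adj_kron)

lemma uni_adj_inv:
  assumes "U \<in> carrier_mat d d" "U * adj U = 1\<^sub>m d" shows "uni d (adj U)"
  using assms by (auto simp: uni_def adj_adj adj_carrier)

lemma kron_pow_uni:
  assumes T: "unitary_mat 2 T"
  shows "uni (2^n) (kron_pow T n)" "uni (2^n) (adj (kron_pow T n))"
proof -
  have u1: "uni 2 T" using T by (simp add: unitary_mat_def uni_def)
  have u2: "uni 2 (adj T)" using T by (intro uni_adj_inv) (auto simp: unitary_mat_def)
  have "uni (prod_list (map (\<lambda>_. 2) (replicate n T))) (kron_list (map id (replicate n T)))"
    by (rule uni_kron_list) (use u1 in auto)
  then show "uni (2^n) (kron_pow T n)" by (simp add: kron_pow_def prod_list_replicate)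
  have "uni (prod_list (map (\<lambda>_. 2) (replicate n T))) (kron_list (map adj (replicate n T)))"
    by (rule uni_kron_list) (use u2 in auto)
  then show "uni (2^n) (adj (kron_pow T n))" by (simp add: kron_pow_def prod_list_replicate adj_kron_list)
qed

lemma uni_mult: "uni d A \<Longrightarrow> uni d B \<Longrightarrow> uni d (A * B)"
proof -
  assume A: "uni d A" and B: "uni d B"
  then have Ac: "A \<in> carrier_mat d d" and Bc: "B \<in> carrier_mat d d" and aA: "adj A * A = 1\<^sub>m d" and bB: "adj B * B = 1\<^sub>m d"
    by (auto simp: uni_def)
  have adjc: "adj A \<in> carrier_mat d d" "adj B \<in> carrier_mat d d" using Ac Bc by (auto simp: carrier_matD intro!: carrier_matI)
  have "adj (A * B) * (A * B) = adj B * (adj A * A) * B"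
    using Ac Bc adjc by (simp add: adj_mult assoc_mult_mat[of _ d d _ d _ d])
  also have "\<dots> = 1\<^sub>m d" using aA bB Bc adjc by simp
  finally show ?thesis using Ac Bc by (simp add: uni_def)
qed

lemma persp_uni:
  assumes T: "unitary_mat 2 T" and G: "uni (2^n) G"
  shows "uni (2^n) (persp T n G)"
  unfolding persp_def
  by (intro uni_mult kron_pow_uni[OF T] G)


lemma cnj_if01: "cnj (if b then 1 else 0) = (if b then 1 else (0::complex))" by simp

lemma perm_uni:
  assumes f1: "\<And>c. c < d \<Longrightarrow> f c < d" and f2: "\<And>c. c < d \<Longrightarrow> f (f c) = c"
  shows "uni d (perm_mat d f)"
proof -
  let ?P = "perm_mat d f"
  have P: "?P \<in> carrier_mat d d" by (simp add: perm_mat_def)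
  have "adj ?P * ?P = 1\<^sub>m d"
  proof (rule eq_matI)
    fix i j assume "i < dim_row (1\<^sub>m d :: complex mat)" "j < dim_col (1\<^sub>m d :: complex mat)"
    then have i: "i < d" and j: "j < d" by auto
    have "(adj ?P * ?P) $$ (i,j) = (\<Sum>r<d. cnj (?P $$ (r,i)) * ?P $$ (r,j))"
      using i j P by (simp add: scalar_prod_def row_def col_def adj_index lessThan_atLeast0)
    also have "\<dots> = (\<Sum>r<d. if r = f i then (if f i = f j then 1 else 0) else 0)"
    proof (rule sum.cong[OF refl])
      fix r assume "r \<in> {..<d}"
      then show "cnj (?P $$ (r,i)) * ?P $$ (r,j) = (if r = f i then (if f i = f j then 1 else 0) else 0)"
        using i j by (simp add: perm_mat_def)
    qed
    also have "\<dots> = (if f i = f j then 1 else 0)" using f1[OF i] by (simp add: sum.delta)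
    also have "\<dots> = 1\<^sub>m d $$ (i,j)"
    proof -
      have "f i = f j \<Longrightarrow> i = j" using f2[OF i] f2[OF j] by metis
      then show ?thesis using i j by auto
    qed
    finally show "(adj ?P * ?P) $$ (i,j) = 1\<^sub>m d $$ (i,j)" .
  qed (use P in auto)
  then show ?thesis using P by (simp add: uni_def)
qed

lemma bit2: "(e::nat) < 2 \<Longrightarrow> (2 * q + e) div 2 = q \<and> (2 * q + e) mod 2 = e"
  by auto

lemma bit2_lt: "(y::nat) < 2^n \<Longrightarrow> 0 < n \<Longrightarrow> e < 2 \<Longrightarrow> 2 * (y div 2) + e < 2^n"
proof -
  assume "y < 2^n" "0 < n" "e < 2"
  then obtain n' where n: "n = Suc n'" by (cases n) auto
  have "y div 2 < 2^n'" using \<open>y < 2^n\<close> n by (simp add: less_mult_imp_div_less mult.commute)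
  then show ?thesis using \<open>e < 2\<close> n by simp
qed

lemma h2: "(y::nat) < B \<Longrightarrow> (x*B+y) div B = x \<and> (x*B+y) mod B = y"
  by auto

lemma NOT_uni: "0 < n \<Longrightarrow> uni (2^n) (NOT_g n)"
  unfolding NOT_g_def
proof (rule perm_uni)
  fix c assume n: "0 < n" and c: "c < (2::nat)^n"
  have e: "1 - c mod 2 < 2" by simp
  from bit2_lt[OF c n e] show "2 * (c div 2) + (1 - c mod 2) < 2^n" .
  have b: "(2 * (c div 2) + (1 - c mod 2)) div 2 = c div 2" "(2 * (c div 2) + (1 - c mod 2)) mod 2 = 1 - c mod 2"
    using bit2[OF e, of "c div 2"] by auto
  have "c mod 2 \<le> 1" by simp
  then have "1 - (1 - c mod 2) = c mod 2" by linarith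
  then show "2 * ((2 * (c div 2) + (1 - c mod 2)) div 2) + (1 - (2 * (c div 2) + (1 - c mod 2)) mod 2) = c"
    unfolding b using mult_div_mod_eq[of 2 c] by simp
qed

definition xorf :: "nat \<Rightarrow> nat \<Rightarrow> nat" where
  "xorf n c = (let x = c div 2^n; y = c mod 2^n in
     x * 2^n + (2 * (y div 2) + ((x mod 2 + y mod 2) mod 2)))"

lemma xorf_eq: "y < 2^n \<Longrightarrow> xorf n (x * 2^n + y) = x * 2^n + (2 * (y div 2) + ((x mod 2 + y mod 2) mod 2))"
  by (simp add: xorf_def Let_def)

lemma XOR_uni: "0 < n \<Longrightarrow> uni (2^(m+n)) (XOR_g m n)"
proof -
  assume n: "0 < n"
  have e: "XOR_g m n = perm_mat (2^(m+n)) (xorf n)" unfolding XOR_g_def xorf_def ..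
  show ?thesis unfolding e
  proof (rule perm_uni)
    fix c assume c: "c < (2::nat)^(m+n)"
    define x where "x = c div 2^n"
    define y where "y = c mod 2^n"
    have x: "x < 2^m" using c by (simp add: x_def power_add less_mult_imp_div_less)
    have y: "y < 2^n" by (simp add: y_def)
    have cxy: "c = x * 2^n + y" unfolding x_def y_def by (rule div_mult_mod_eq[symmetric])
    define y' where "y' = 2 * (y div 2) + ((x mod 2 + y mod 2) mod 2)"
    have y': "y' < 2^n" unfolding y'_def by (rule bit2_lt[OF y n]) simp
    have y'b: "y' div 2 = y div 2" "y' mod 2 = (x mod 2 + y mod 2) mod 2" unfolding y'_def by auto
    have fc: "xorf n c = x * 2^n + y'" unfolding cxy y'_def by (rule xorf_eq[OF y])
    show "xorf n c < 2^(m+n)" unfolding fc power_add using idx_lt[OF x y'] by (simp add: mult.commute)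
    have "x mod 2 = 0 \<or> x mod 2 = 1" "y mod 2 = 0 \<or> y mod 2 = 1" by auto
    then have key: "(x mod 2 + (x mod 2 + y mod 2) mod 2) mod 2 = y mod 2" by (elim disjE) simp_all
    have "xorf n (xorf n c) = x * 2^n + (2 * (y' div 2) + ((x mod 2 + y' mod 2) mod 2))"
      unfolding fc by (rule xorf_eq[OF y'])
    also have "\<dots> = x * 2^n + (2 * (y div 2) + y mod 2)" using y'b key by simp
    also have "\<dots> = c" using cxy mult_div_mod_eq[of 2 y] by simp
    finally show "xorf n (xorf n c) = c" .
  qed
qed


definition toff :: "nat \<Rightarrow> nat \<Rightarrow> nat \<Rightarrow> nat" where
  "toff n p c = (let x = c div 2^(n+p); y = (c div 2^p) mod 2^n; z = c mod 2^p in
     (x * 2^n + y) * 2^p + (2 * (z div 2) + ((x mod 2 * (y mod 2) + z mod 2) mod 2)))"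

lemma dec3:
  assumes "y < (2::nat)^n" "z < 2^p"
  shows "((x*2^n+y)*2^p+z) div 2^(n+p) = x" "((x*2^n+y)*2^p+z) div 2^p mod 2^n = y" "((x*2^n+y)*2^p+z) mod 2^p = z"
proof -
  have a: "((x*2^n+y)*2^p+z) div 2^p = x*2^n+y" "((x*2^n+y)*2^p+z) mod 2^p = z" using h2[OF assms(2)] by auto
  have "(x*2^n+y) div 2^n = x" "(x*2^n+y) mod 2^n = y" using h2[OF assms(1)] by auto
  then show "((x*2^n+y)*2^p+z) div 2^(n+p) = x" "((x*2^n+y)*2^p+z) div 2^p mod 2^n = y" "((x*2^n+y)*2^p+z) mod 2^p = z"
    using a by (simp_all add: power_add div_mult2_eq mult.commute[of "2^n" "2^p"])
qed

lemma toff_eq: "y < 2^n \<Longrightarrow> z < 2^p \<Longrightarrow>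
  toff n p ((x*2^n+y)*2^p+z) = (x*2^n+y)*2^p + (2 * (z div 2) + ((x mod 2 * (y mod 2) + z mod 2) mod 2))"
  unfolding toff_def Let_def dec3 by simp

lemma Tof_uni: "0 < p \<Longrightarrow> uni (2^(m+n+p)) (Tof_g m n p)"
proof -
  assume pp: "0 < p"
  have e: "Tof_g m n p = perm_mat (2^(m+n+p)) (toff n p)" unfolding Tof_g_def toff_def ..
  show ?thesis unfolding e
  proof (rule perm_uni)
    fix c assume c: "c < (2::nat)^(m+n+p)"
    define x where "x = c div 2^(n+p)"
    define y where "y = (c div 2^p) mod 2^n"
    define z where "z = c mod 2^p"
    have x: "x < 2^m" using c by (simp add: x_def power_add less_mult_imp_div_less mult.assoc)
    have y: "y < 2^n" by (simp add: y_def)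
    have z: "z < 2^p" by (simp add: z_def)
    have "c div 2^p = (c div 2^p div 2^n) * 2^n + y" unfolding y_def by (rule div_mult_mod_eq[symmetric])
    moreover have "c div 2^p div 2^n = x" by (simp add: x_def power_add div_mult2_eq mult.commute[of "2^n" "2^p"])
    ultimately have cxy: "c = (x*2^n+y)*2^p + z" using div_mult_mod_eq[of c "2^p"] by (simp add: z_def)
    define z' where "z' = 2 * (z div 2) + ((x mod 2 * (y mod 2) + z mod 2) mod 2)"
    have z': "z' < 2^p" unfolding z'_def by (rule bit2_lt[OF z pp]) simp
    have z'b: "z' div 2 = z div 2" "z' mod 2 = (x mod 2 * (y mod 2) + z mod 2) mod 2" unfolding z'_def by auto
    have fc: "toff n p c = (x*2^n+y)*2^p + z'" unfolding cxy z'_def by (rule toff_eq[OF y z])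
    have "x*2^n+y < 2^m * 2^n" by (rule idx_lt[OF x y])
    then have "(x*2^n+y)*2^p + z' < 2^m * 2^n * 2^p" by (rule idx_lt[OF _ z'])
    then show "toff n p c < 2^(m+n+p)" unfolding fc by (simp add: power_add)
    have "x mod 2 = 0 \<or> x mod 2 = 1" "y mod 2 = 0 \<or> y mod 2 = 1" "z mod 2 = 0 \<or> z mod 2 = 1" by auto
    then have key: "(x mod 2 * (y mod 2) + (x mod 2 * (y mod 2) + z mod 2) mod 2) mod 2 = z mod 2"
      by (elim disjE) simp_all
    have "toff n p (toff n p c) = (x*2^n+y)*2^p + (2 * (z' div 2) + ((x mod 2 * (y mod 2) + z' mod 2) mod 2))"
      unfolding fc by (rule toff_eq[OF y z'])
    also have "\<dots> = (x*2^n+y)*2^p + (2 * (z div 2) + z mod 2)" using z'b key by simp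
    also have "\<dots> = c" using cxy mult_div_mod_eq[of 2 z] by simp
    finally show "toff n p (toff n p c) = c" .
  qed
qed

definition Hmat :: "complex mat" where
  "Hmat = mat 2 2 (\<lambda>(r,c). if r = c then (-1) ^ c / complex_of_real (sqrt 2) else 1 / complex_of_real (sqrt 2))"
definition SNmat :: "complex mat" where
  "SNmat = mat 2 2 (\<lambda>(r,c). if r = c then (1 - \<i>) / 2 else (1 + \<i>) / 2)"

lemma SqrtI_kron: "0 < n \<Longrightarrow> SqrtI_g n = kron (1\<^sub>m (2^(n-1))) Hmat"
proof -
  assume "0 < n"
  then have d: "2^n = 2^(n-1) * (2::nat)" by (cases n) auto
  show ?thesis
    by (rule eq_matI) (auto simp: SqrtI_g_def kron_def Hmat_def d div_mod_lt)
qed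

lemma SqrtNOT_kron: "0 < n \<Longrightarrow> SqrtNOT_g n = kron (1\<^sub>m (2^(n-1))) SNmat"
proof -
  assume "0 < n"
  then have d: "2^n = 2^(n-1) * (2::nat)" by (cases n) auto
  show ?thesis
    by (rule eq_matI) (auto simp: SqrtNOT_g_def kron_def SNmat_def d div_mod_lt)
qed

lemma uni_one: "uni n (1\<^sub>m n)" by (simp add: uni_def adj_one)

lemma sum2: "(\<Sum>k<2. f k) = f 0 + f (Suc 0)" by (simp add: numeral_2_eq_2)

lemma Hmat_uni: "uni 2 Hmat"
proof -
  have "adj Hmat * Hmat = 1\<^sub>m 2"
  proof (rule eq_matI)
    fix i j assume "i < dim_row (1\<^sub>m 2 :: complex mat)" "j < dim_col (1\<^sub>m 2 :: complex mat)"
    then have i: "i < 2" and j: "j < 2" by auto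
    have s2: "complex_of_real (sqrt 2) * complex_of_real (sqrt 2) = 2"
      by (simp flip: of_real_mult)
    have "(adj Hmat * Hmat) $$ (i,j) = (\<Sum>k<2. cnj (Hmat $$ (k,i)) * Hmat $$ (k,j))"
      using i j by (simp add: scalar_prod_def row_def col_def adj_index lessThan_atLeast0 Hmat_def)
    also have "\<dots> = 1\<^sub>m 2 $$ (i,j)"
    proof -
      have sn: "complex_of_real (sqrt 2) \<noteq> 0" by simp
      have ij: "i = 0 \<or> i = 1" "j = 0 \<or> j = 1" using i j by auto
      then show ?thesis using s2 sn by (elim disjE) (simp_all add: sum2 Hmat_def field_simps)
    qed
    finally show "(adj Hmat * Hmat) $$ (i,j) = 1\<^sub>m 2 $$ (i,j)" .
  qed (auto simp: Hmat_def)
  then show ?thesis by (simp add: uni_def Hmat_def)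
qed

lemma SNmat_uni: "uni 2 SNmat"
proof -
  have "adj SNmat * SNmat = 1\<^sub>m 2"
  proof (rule eq_matI)
    fix i j assume "i < dim_row (1\<^sub>m 2 :: complex mat)" "j < dim_col (1\<^sub>m 2 :: complex mat)"
    then have i: "i < 2" and j: "j < 2" by auto
    have "(adj SNmat * SNmat) $$ (i,j) = (\<Sum>k<2. cnj (SNmat $$ (k,i)) * SNmat $$ (k,j))"
      using i j by (simp add: scalar_prod_def row_def col_def adj_index lessThan_atLeast0 SNmat_def)
    also have "\<dots> = 1\<^sub>m 2 $$ (i,j)"
    proof -
      have ij: "i = 0 \<or> i = 1" "j = 0 \<or> j = 1" using i j by auto
      then show ?thesis by (elim disjE) (simp_all add: sum2 SNmat_def field_simps complex_eq_iff)
    qed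
    finally show "(adj SNmat * SNmat) $$ (i,j) = 1\<^sub>m 2 $$ (i,j)" .
  qed (auto simp: SNmat_def)
  then show ?thesis by (simp add: uni_def SNmat_def)
qed

lemma SqrtI_uni: "0 < n \<Longrightarrow> uni (2^n) (SqrtI_g n)"
proof -
  assume n: "0 < n"
  have "uni (2^(n-1) * 2) (kron (1\<^sub>m (2^(n-1))) Hmat)" by (intro uni_kron uni_one Hmat_uni)
  moreover have "2^(n-1) * 2 = (2::nat)^n" using n by (cases n) auto
  ultimately show ?thesis using SqrtI_kron[OF n] by simp
qed

lemma SqrtNOT_uni: "0 < n \<Longrightarrow> uni (2^n) (SqrtNOT_g n)"
proof -
  assume n: "0 < n"
  have "uni (2^(n-1) * 2) (kron (1\<^sub>m (2^(n-1))) SNmat)" by (intro uni_kron uni_one SNmat_uni)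
  moreover have "2^(n-1) * 2 = (2::nat)^n" using n by (cases n) auto
  ultimately show ?thesis using SqrtNOT_kron[OF n] by simp
qed


lemma At_pos: "0 < At \<beta>" by (induction \<beta>) auto

lemma local_gate_uni:
  assumes T: "unitary_mat 2 T" shows "uni (2 ^ At \<beta>) (local_gate T \<beta>)"
proof (cases \<beta>)
  case (Neg a) then show ?thesis by (simp add: persp_uni[OF T] NOT_uni At_pos)
next
  case (SqId a) then show ?thesis by (simp add: persp_uni[OF T] SqrtI_uni At_pos)
next
  case (SqNeg a) then show ?thesis by (simp add: persp_uni[OF T] SqrtNOT_uni At_pos)
next
  case (Xor a b) then show ?thesis by (simp add: persp_uni[OF T] XOR_uni At_pos)
next
  case (Tof a b c) then show ?thesis by (simp add: persp_uni[OF T] Tof_uni At_pos)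
qed (simp_all add: uni_one)

lemma sum_At_expand1: "sum_list (map At (expand1 \<beta>)) = At \<beta>" by (cases \<beta>) auto

lemma sum_At_concat: "sum_list (map At (concat (map expand1 xs))) = sum_list (map At xs)"
  by (induction xs) (simp_all add: sum_At_expand1)

lemma level_Suc: "1 \<le> i \<Longrightarrow> level \<gamma> (Suc i) = expand (level \<gamma> i)"
  unfolding level_def by (cases i) auto

lemma sum_At_iter: "sum_list (map At ((expand ^^ n) [\<gamma>])) = At \<gamma>"
  by (induction n) (simp_all add: expand_def sum_At_concat)

lemma sum_At_level: "sum_list (map At (level \<gamma> i)) = At \<gamma>"
  unfolding level_def by (rule sum_At_iter)

lemma expand1_atomic: "is_atomic z \<Longrightarrow> expand1 z = [z]" by (cases z) auto

lemma height_pos: "1 \<le> height x" by (cases x) auto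

lemma expand1_height: "\<not> is_atomic z \<Longrightarrow> x \<in> set (expand1 z) \<Longrightarrow> height x < height z"
  by (cases z) auto

lemma height_na: "\<not> is_atomic x \<Longrightarrow> 2 \<le> height x"
proof -
  have hp: "\<And>y. 0 < height y" using height_pos by (simp add: Suc_le_eq)
  show "\<not> is_atomic x \<Longrightarrow> 2 \<le> height x" by (cases x) (auto simp: le_max_iff_disj Suc_le_eq hp)
qed

lemma na_height: "\<not> is_atomic x \<Longrightarrow> x \<in> set ((expand ^^ n) [\<gamma>]) \<Longrightarrow> n + height x \<le> height \<gamma>"
proof (induction n arbitrary: x)
  case 0 then show ?case by simp
next
  case (Suc n)
  have "x \<in> set (expand ((expand ^^ n) [\<gamma>]))" using Suc.prems by simp
  then obtain z where z: "z \<in> set ((expand ^^ n) [\<gamma>])" "x \<in> set (expand1 z)" unfolding expand_def by auto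
  have "\<not> is_atomic z" using z(2) Suc.prems(1) expand1_atomic by fastforce
  then have "height x < height z" "n + height z \<le> height \<gamma>" using Suc.IH z expand1_height by auto
  then show ?case by simp
qed

lemma occ_level_lt:
  assumes "1 \<le> i" "j < length (level \<gamma> i)" "\<not> is_atomic (level \<gamma> i ! j)"
  shows "i < height \<gamma>"
proof -
  have "level \<gamma> i ! j \<in> set ((expand ^^ (i-1)) [\<gamma>])" using assms by (simp add: level_def)
  from na_height[OF assms(3) this] height_na[OF assms(3)] assms(1) show ?thesis by simp
qed

lemma kron_one_left: "kron (1\<^sub>m 1) B = B"
  by (rule eq_matI) (auto simp: kron_def)

lemma kron_one_left': "kron (1\<^sub>m (Suc 0)) B = B"
  using kron_one_left by simp

lemma kron_list_Cons: "kron_list (x # xs) = kron x (kron_list xs)"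
  by (simp add: kron_list_def)

lemma kron_list_append: "kron_list (xs @ ys) = kron (kron_list xs) (kron_list ys)"
  by (induction xs) (simp_all add: kron_list_def kron_one_left kron_one_left' kron_assoc)

lemma split_at: "j < length L \<Longrightarrow> L = take j L @ L ! j # drop (Suc j) L"
  by (simp add: id_take_nth_drop)

lemma prod_2At: "prod_list (map (\<lambda>x. 2 ^ At x) xs) = (2::nat) ^ sum_list (map At xs)"
  by (induction xs) (simp_all add: power_add)

lemma occ_main:
  assumes T: "unitary_mat 2 T" and H: "holistic T Hol" and i: "1 \<le> i"
    and j: "j < length (level \<gamma> i)" and na: "\<not> is_atomic (level \<gamma> i ! j)"
  shows "Hol_sub Hol \<gamma> (level \<gamma> i ! j) = app_gate (local_gate T (level \<gamma> i ! j))
     (Red (map At (level \<gamma> (Suc i))) [child_pos (level \<gamma> i) j ..< child_pos (level \<gamma> i) j + length (expand1 (level \<gamma> i ! j))]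
       (Hol \<gamma> (Suc i)))"
proof -
  define L where "L = level \<gamma> i"
  define \<beta> where "\<beta> = L ! j"
  define A where "A = take j L"
  define B where "B = drop (Suc j) L"
  have jL: "j < length L" using j by (simp add: L_def)
  have Ls: "L = A @ \<beta> # B" unfolding A_def B_def \<beta>_def using split_at[OF jL] .
  have lA: "length A = j" using jL by (simp add: A_def)
  have hi: "i < height \<gamma>" using occ_level_lt[OF i j na] .
  have occ: "(i,j) \<in> occs \<gamma> \<beta>" using i hi j by (simp add: occs_def L_def \<beta>_def)
  have hs: "Hol_sub Hol \<gamma> \<beta> = ctx Hol \<gamma> i j"
  proof -
    obtain i' j' where p: "(SOME p. p \<in> occs \<gamma> \<beta>) = (i',j')" by force
    have "(i',j') \<in> occs \<gamma> \<beta>" using someI[of "\<lambda>p. p \<in> occs \<gamma> \<beta>", OF occ] p by simp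
    then have "ctx Hol \<gamma> i' j' = ctx Hol \<gamma> i j" using H occ unfolding holistic_def by blast
    then show ?thesis by (simp add: Hol_sub_def p)
  qed
  define PA where "PA = (2::nat) ^ sum_list (map At A)"
  define D where "D = (2::nat) ^ At \<beta>"
  define PB where "PB = (2::nat) ^ sum_list (map At B)"
  have Atg: "At \<gamma> = sum_list (map At A) + At \<beta> + sum_list (map At B)"
    using sum_At_level[of \<gamma> i] Ls by (simp add: L_def)
  have dimg: "(2::nat) ^ At \<gamma> = PA * (D * PB)" by (simp add: Atg PA_def D_def PB_def power_add)
  define \<rho> where "\<rho> = Hol \<gamma> (Suc i)"
  have \<rho>c: "\<rho> \<in> carrier_mat (PA * (D * PB)) (PA * (D * PB))"
    using H hi unfolding holistic_def density_def \<rho>_def dimg[symmetric] by auto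
  have "ctx Hol \<gamma> i j = Red (map At L) [j..<j+1] (Hol \<gamma> i)" by (simp add: ctx_def L_def)
  also have "\<dots> = ptrR D PB (ptrL PA (D*PB) (Hol \<gamma> i))"
  proof -
    have "j + 1 \<le> length (map At L)" using jL by simp
    from Red_block[OF this, of "Hol \<gamma> i"] show ?thesis
      unfolding Ls by (simp add: lA PA_def D_def PB_def)
  qed
  also have "Hol \<gamma> i = app_gate (level_gate T \<gamma> i) \<rho>"
    using H i hi unfolding holistic_def \<rho>_def by simp
  also have "level_gate T \<gamma> i = kron (kron_list (map (local_gate T) A)) (kron (local_gate T \<beta>) (kron_list (map (local_gate T) B)))"
    unfolding level_gate_def L_def[symmetric] by (subst Ls) (simp add: kron_list_append kron_list_Cons)
  finally have lhs: "ctx Hol \<gamma> i j = local_gate T \<beta> * ptrR D PB (ptrL PA (D*PB) \<rho>) * adj (local_gate T \<beta>)"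
  proof -
    assume e: "ctx Hol \<gamma> i j = ptrR D PB (ptrL PA (D * PB) (app_gate (kron (kron_list (map (local_gate T) A))
       (kron (local_gate T \<beta>) (kron_list (map (local_gate T) B)))) \<rho>))"
    have UA: "uni PA (kron_list (map (local_gate T) A))"
      unfolding PA_def prod_2At[symmetric] by (rule uni_kron_list) (rule local_gate_uni[OF T])
    have UB: "uni PB (kron_list (map (local_gate T) B))"
      unfolding PB_def prod_2At[symmetric] by (rule uni_kron_list) (rule local_gate_uni[OF T])
    have UG: "uni D (local_gate T \<beta>)" unfolding D_def by (rule local_gate_uni[OF T])
    show ?thesis unfolding e app_gate_def
      using ptr3_conj[of _ PA _ PB _ D \<rho>] UA UB UG \<rho>c by (simp add: uni_def)
  qed
  define C1 where "C1 = concat (map expand1 A)"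
  define C2 where "C2 = concat (map expand1 B)"
  have L': "level \<gamma> (Suc i) = C1 @ expand1 \<beta> @ C2"
    unfolding level_Suc[OF i] L_def[symmetric] expand_def C1_def C2_def by (subst Ls) simp
  have k1: "child_pos L j = length C1" by (simp add: child_pos_def C1_def A_def)
  have "Red (map At (level \<gamma> (Suc i))) [length C1..<length C1 + length (expand1 \<beta>)] \<rho>
      = ptrR D PB (ptrL PA (D*PB) \<rho>)"
  proof -
    have "length C1 + length (expand1 \<beta>) \<le> length (map At (level \<gamma> (Suc i)))" by (simp add: L')
    from Red_block[OF this, of \<rho>] show ?thesis
      by (simp add: L' PA_def D_def PB_def C1_def C2_def sum_At_concat sum_At_expand1)
  qed
  then show ?thesis using hs lhs k1
    by (simp add: L_def[symmetric] \<beta>_def[symmetric] \<rho>_def app_gate_def)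
qed

theorem theorem4p9:
  fixes T :: "complex mat" and Hol :: "form \<Rightarrow> nat \<Rightarrow> complex mat" and \<gamma> :: form
  assumes "unitary_mat 2 T"
    and "holistic T Hol"
  shows
   "(\<forall>i j a1 a2 a3. 1 \<le> i \<and> j < length (level \<gamma> i) \<and> level \<gamma> i ! j = Tof a1 a2 a3 \<longrightarrow>
       (let k1 = child_pos (level \<gamma> i) j in
        Hol_sub Hol \<gamma> (Tof a1 a2 a3) =
          app_gate (persp T (At a1 + At a2 + At a3) (Tof_g (At a1) (At a2) (At a3)))
            (Red (map At (level \<gamma> (Suc i))) [k1, k1 + 1, k1 + 2] (Hol \<gamma> (Suc i))))) \<and>
    (\<forall>i j a1 a2. 1 \<le> i \<and> j < length (level \<gamma> i) \<and> level \<gamma> i ! j = Xor a1 a2 \<longrightarrow>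
       (let k1 = child_pos (level \<gamma> i) j in
        Hol_sub Hol \<gamma> (Xor a1 a2) =
          app_gate (persp T (At a1 + At a2) (XOR_g (At a1) (At a2)))
            (Red (map At (level \<gamma> (Suc i))) [k1, k1 + 1] (Hol \<gamma> (Suc i)))))"
proof (intro conjI allI impI)
  fix i j a1 a2 a3
  assume h: "1 \<le> i \<and> j < length (level \<gamma> i) \<and> level \<gamma> i ! j = Tof a1 a2 a3"
  then have na: "\<not> is_atomic (level \<gamma> i ! j)" by simp
  have u3: "\<And>k. [k..<k + 3] = [k, k + 1, k + 2]" by (simp add: numeral_3_eq_3)
  show "let k1 = child_pos (level \<gamma> i) j in
        Hol_sub Hol \<gamma> (Tof a1 a2 a3) =
          app_gate (persp T (At a1 + At a2 + At a3) (Tof_g (At a1) (At a2) (At a3)))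
            (Red (map At (level \<gamma> (Suc i))) [k1, k1 + 1, k1 + 2] (Hol \<gamma> (Suc i)))"
    using occ_main[OF assms(1,2) conjunct1[OF h] conjunct1[OF conjunct2[OF h]] na] h by (simp add: Let_def u3)
next
  fix i j a1 a2
  assume h: "1 \<le> i \<and> j < length (level \<gamma> i) \<and> level \<gamma> i ! j = Xor a1 a2"
  then have na: "\<not> is_atomic (level \<gamma> i ! j)" by simp
  have u2: "\<And>k. [k..<k + 2] = [k, k + 1]" by (simp add: numeral_2_eq_2)
  show "let k1 = child_pos (level \<gamma> i) j in
        Hol_sub Hol \<gamma> (Xor a1 a2) =
          app_gate (persp T (At a1 + At a2) (XOR_g (At a1) (At a2)))
            (Red (map At (level \<gamma> (Suc i))) [k1, k1 + 1] (Hol \<gamma> (Suc i)))"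
    using occ_main[OF assms(1,2) conjunct1[OF h] conjunct1[OF conjunct2[OF h]] na] h by (simp add: Let_def u2)
qed

end
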